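(* For every $n\ge 1$, the map $\mathcal I^C_{2n}(321)\to 2^{[n]}$, $\pi\mapsto E_\pi$, is a bijection. In particular $|\mathcal I^C_{2n}(321)|=2^n$, and every element of $\mathcal I^C_{2n}(321)$ is uniquely determined by its set of excedances lying in $[n]$.
   Context: $[n]=\{1,\dots,n\}$ and $2^{[n]}$ is the family of all subsets of $[n]$. A permutation $\pi\in\mathcal S_m$ is centrosymmetric if $\pi(i)+\pi(m+1-i)=m+1$ for all $i$; $\mathcal I^C_{m}(321)$ is the set of centrosymmetric involutions in $\mathcal S_m$ avoiding the pattern $321$. An excedance of $\pi$ is a position $i$ with $\pi(i)>i$; $\mathrm{Exc}(\pi)$ is the set of excedances, and for $\pi\in\mathcal I^C_{2n}(321)$, $E_\pi=\mathrm{Exc}(\pi)\cap[n]$. *)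

theory Defs
  imports Main "HOL-Combinatorics.Permutations"
begin

text \<open>Permutations of [m] = {1..m} are functions nat => nat permuting {1..m}
  (identity outside).\<close>

definition centrosymmetric :: "nat \<Rightarrow> (nat \<Rightarrow> nat) \<Rightarrow> bool" where
  "centrosymmetric m \<pi> \<longleftrightarrow> (\<forall>i\<in>{1..m}. \<pi> i + \<pi> (m + 1 - i) = m + 1)"

definition involution_on :: "nat \<Rightarrow> (nat \<Rightarrow> nat) \<Rightarrow> bool" where
  "involution_on m \<pi> \<longleftrightarrow> (\<forall>i\<in>{1..m}. \<pi> (\<pi> i) = i)"

definition avoids321 :: "nat \<Rightarrow> (nat \<Rightarrow> nat) \<Rightarrow> bool" where
  "avoids321 m \<pi> \<longleftrightarrow>
     \<not> (\<exists>i j k. 1 \<le> i \<and> i < j \<and> j < k \<and> k \<le> m \<and> \<pi> i > \<pi> j \<and> \<pi> j > \<pi> k)"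

definition IC321 :: "nat \<Rightarrow> (nat \<Rightarrow> nat) set" where
  "IC321 m = {\<pi>. \<pi> permutes {1..m} \<and> involution_on m \<pi> \<and> centrosymmetric m \<pi> \<and> avoids321 m \<pi>}"

definition Exc :: "nat \<Rightarrow> (nat \<Rightarrow> nat) \<Rightarrow> nat set" where
  "Exc m \<pi> = {i \<in> {1..m}. \<pi> i > i}"

definition Epi :: "nat \<Rightarrow> (nat \<Rightarrow> nat) \<Rightarrow> nat set" where
  "Epi n \<pi> = Exc (2 * n) \<pi> \<inter> {1..n}"

end

theory Submission imports Defs begin

definition rk :: "nat set \<Rightarrow> nat \<Rightarrow> nat" where
  "rk X y = card {z\<in>X. z < y}"

lemma rk_mono:
  assumes "finite X" "y < y'" "y \<in> X"
  shows "rk X y < rk X y'"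
proof -
  have "{z\<in>X. z < y} \<subset> {z\<in>X. z < y'}" using assms by auto
  moreover have "finite {z\<in>X. z < y'}" using assms by auto
  ultimately show ?thesis unfolding rk_def by (simp add: psubset_card_mono)
qed

lemma rk_less_iff:
  assumes "finite X" "y \<in> X" "y' \<in> X"
  shows "rk X y < rk X y' \<longleftrightarrow> y < y'"
  using rk_mono[OF assms(1)] assms
  by (metis linorder_neq_iff order_less_asym)

lemma rk_inj:
  assumes "finite X" "y \<in> X" "y' \<in> X" "rk X y = rk X y'"
  shows "y = y'"
  using rk_mono[OF assms(1)] assms
  by (metis linorder_neq_iff less_irrefl)

lemma rk_lt_card:
  assumes "finite X" "y \<in> X"
  shows "rk X y < card X"
proof -
  have "{z\<in>X. z < y} \<subset> X" using assms by auto
  thus ?thesis unfolding rk_def using assms by (simp add: psubset_card_mono)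
qed

lemma rk_surj:
  assumes "finite X" "k < card X"
  shows "\<exists>y\<in>X. rk X y = k"
proof -
  have inj: "inj_on (rk X) X" using rk_inj[OF assms(1)] by (auto simp: inj_on_def)
  have sub: "rk X ` X \<subseteq> {..<card X}" using rk_lt_card[OF assms(1)] by auto
  have "card (rk X ` X) = card {..<card X}" using card_image[OF inj] by simp
  hence "rk X ` X = {..<card X}" using card_subset_eq[OF _ sub] by simp
  hence "k \<in> rk X ` X" using assms by auto
  thus ?thesis by (metis imageE)
qed

lemma rk_unique:
  assumes "finite X" "k < card X"
  shows "\<exists>!y. y \<in> X \<and> rk X y = k"
  using rk_surj[OF assms] rk_inj[OF assms(1)] by blast

definition matchp :: "nat set \<Rightarrow> nat set \<Rightarrow> nat \<Rightarrow> nat" where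
  "matchp A B x = (if x \<in> A then (THE y. y \<in> B \<and> rk B y = rk A x)
     else if x \<in> B then (THE y. y \<in> A \<and> rk A y = rk B x) else x)"

locale mt =
  fixes A B :: "nat set" and m :: nat
  assumes AB: "A \<subseteq> {1..m}" "B \<subseteq> {1..m}" "A \<inter> B = {}" "card A = card B"
    and H1: "\<And>t. card {b\<in>B. b < t} \<le> card {a\<in>A. a < t}"
    and H2: "\<And>f. f \<in> {1..m} \<Longrightarrow> f \<notin> A \<Longrightarrow> f \<notin> B \<Longrightarrow>
               card {b\<in>B. b < f} = card {a\<in>A. a < f}"
begin

lemma finA: "finite A" and finB: "finite B"
  using AB finite_subset by blast+

abbreviation "\<pi> \<equiv> matchp A B"

lemma mA: assumes "x \<in> A" shows "\<pi> x \<in> B \<and> rk B (\<pi> x) = rk A x"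
proof -
  have "\<exists>!y. y \<in> B \<and> rk B y = rk A x"
    using rk_unique[OF finB] rk_lt_card[OF finA assms] AB(4) by simp
  from theI'[OF this] show ?thesis using assms unfolding matchp_def by simp
qed

lemma mB: assumes "x \<in> B" shows "\<pi> x \<in> A \<and> rk A (\<pi> x) = rk B x"
proof -
  have "\<exists>!y. y \<in> A \<and> rk A y = rk B x"
    using rk_unique[OF finA] rk_lt_card[OF finB assms] AB(4) by simp
  moreover have "x \<notin> A" using assms AB(3) by auto
  ultimately show ?thesis using assms theI'[of "\<lambda>y. y \<in> A \<and> rk A y = rk B x"]
    unfolding matchp_def by simp
qed

lemma mO: "x \<notin> A \<Longrightarrow> x \<notin> B \<Longrightarrow> \<pi> x = x"
  unfolding matchp_def by simp

lemma invol: "\<pi> (\<pi> x) = x"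
proof (cases "x \<in> A")
  case True
  then show ?thesis using mA[OF True] mB[of "\<pi> x"] rk_inj[OF finA] by metis
next
  case False
  show ?thesis
  proof (cases "x \<in> B")
    case True
    then show ?thesis using mB[OF True] mA[of "\<pi> x"] rk_inj[OF finB] by metis
  qed (use False mO in auto)
qed

lemma excA: assumes "a \<in> A" shows "a < \<pi> a"
proof (rule ccontr)
  assume "\<not> a < \<pi> a"
  moreover have "\<pi> a \<noteq> a" using mA[OF assms] assms AB(3) by auto
  ultimately have lt: "\<pi> a < a" by simp
  let ?y = "\<pi> a"
  have yB: "?y \<in> B" and r: "rk B ?y = rk A a" using mA[OF assms] by auto
  have "{b\<in>B. b < Suc ?y} = insert ?y {b\<in>B. b < ?y}" using yB by auto
  hence c1: "card {b\<in>B. b < Suc ?y} = Suc (rk B ?y)"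
    unfolding rk_def using finB by simp
  have "{x\<in>A. x < Suc ?y} \<subseteq> {x\<in>A. x < a}" using lt by auto
  hence "card {x\<in>A. x < Suc ?y} \<le> rk A a" unfolding rk_def
    using finA by (simp add: card_mono)
  with c1 r H1[of "Suc ?y"] show False by simp
qed

lemma defB: assumes "b \<in> B" shows "\<pi> b < b"
proof -
  have "\<pi> b \<in> A" using mB[OF assms] by simp
  from excA[OF this] have "\<pi> b < \<pi> (\<pi> b)" .
  hence "\<pi> b < b" using invol by simp
  thus ?thesis .
qed

lemma exc_iff: "\<pi> x > x \<longleftrightarrow> x \<in> A"
  using excA defB mO by (metis less_asym less_irrefl)

lemma def_iff: "\<pi> x < x \<longleftrightarrow> x \<in> B"
  using excA defB mO AB(3) by (metis disjoint_iff less_asym less_irrefl)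


lemma noninc:
  assumes "x < y" "x \<notin> A" "y \<notin> A" "y \<in> {1..m}" "x \<in> {1..m}"
  shows "\<pi> x < \<pi> y"
proof (cases "x \<in> B")
  case xB: True
  show ?thesis
  proof (cases "y \<in> B")
    case True
    have "rk B x < rk B y" using rk_mono[OF finB assms(1) xB] .
    hence "rk A (\<pi> x) < rk A (\<pi> y)" using mB xB True by simp
    thus ?thesis using rk_less_iff[OF finA] mB xB True by blast
  next
    case False
    thus ?thesis using defB[OF xB] mO assms by fastforce
  qed
next
  case xB: False
  hence px: "\<pi> x = x" using mO assms by simp
  show ?thesis
  proof (cases "y \<in> B")
    case True
    let ?a = "\<pi> y"
    have aA: "?a \<in> A" and ra: "rk A ?a = rk B y" using mB[OF True] by auto
    show ?thesis
    proof (rule ccontr)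
      assume "\<not> \<pi> x < \<pi> y"
      hence "?a < x" using px aA assms(2) by (metis linorder_neqE_nat)
      have "insert ?a {z\<in>A. z < ?a} \<subseteq> {z\<in>A. z < x}" using \<open>?a < x\<close> aA by auto
      hence "card (insert ?a {z\<in>A. z < ?a}) \<le> card {z\<in>A. z < x}"
        using finA by (intro card_mono) auto
      moreover have "card (insert ?a {z\<in>A. z < ?a}) = Suc (rk A ?a)"
        unfolding rk_def using finA by simp
      ultimately have c1: "Suc (rk A ?a) \<le> card {z\<in>A. z < x}" by simp
      have "{b\<in>B. b < x} \<subseteq> {b\<in>B. b < y}" using assms by auto
      hence "card {b\<in>B. b < x} \<le> rk B y" unfolding rk_def using finB by (simp add: card_mono)
      with c1 ra H2[OF assms(5) assms(2) xB] show False by simp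
    qed
  next
    case False
    thus ?thesis using px mO assms by simp
  qed
qed

lemma excinc:
  assumes "x < y" "x \<in> A" "y \<in> A"
  shows "\<pi> x < \<pi> y"
proof -
  have "rk A x < rk A y" using rk_mono[OF finA assms(1,2)] .
  hence "rk B (\<pi> x) < rk B (\<pi> y)" using mA assms by simp
  thus ?thesis using rk_less_iff[OF finB] mA assms by blast
qed

lemma avoid: "avoids321 m \<pi>"
  unfolding avoids321_def
proof
  assume "\<exists>i j k. 1 \<le> i \<and> i < j \<and> j < k \<and> k \<le> m \<and> \<pi> j < \<pi> i \<and> \<pi> k < \<pi> j"
  then obtain i j k where h: "1 \<le> i" "i < j" "j < k" "k \<le> m" "\<pi> j < \<pi> i" "\<pi> k < \<pi> j"
    by blast
  show False
  proof (cases "j \<in> A")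
    case True
    have "i \<notin> A" using excinc[OF h(2) _ True] h(5) by fastforce
    hence "\<pi> i \<le> i" using exc_iff[of i] by simp
    moreover have "j < \<pi> j" using exc_iff True by simp
    ultimately show False using h by simp
  next
    case False
    have "k \<in> A"
    proof (rule ccontr)
      assume "k \<notin> A"
      thus False using noninc[OF h(3) False] h by auto
    qed
    hence "k < \<pi> k" using exc_iff by simp
    moreover have "\<pi> j \<le> j" using exc_iff[of j] False by simp
    ultimately show False using h by simp
  qed
qed

lemma perm: "\<pi> permutes {1..m}"
  unfolding permutes_def
proof (intro conjI allI impI)
  fix x assume "x \<notin> {1..m}"
  hence "x \<notin> A" "x \<notin> B" using AB by auto
  thus "\<pi> x = x" by (rule mO)
next
  fix y show "\<exists>!x. \<pi> x = y" using invol by metis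
qed

lemma img: "x \<in> {1..m} \<Longrightarrow> \<pi> x \<in> {1..m}"
  using permutes_in_image[OF perm] by simp

end

definition invm :: "nat \<Rightarrow> (nat \<Rightarrow> nat) \<Rightarrow> bool" where
  "invm m p \<longleftrightarrow> (\<forall>i\<in>{1..m}. p (p i) = i) \<and> (\<forall>i\<in>{1..m}. p i \<in> {1..m}) \<and> avoids321 m p"

definition Op :: "(nat \<Rightarrow> nat) \<Rightarrow> nat \<Rightarrow> nat set" where
  "Op p i = {a. 1 \<le> a \<and> a < i \<and> a < p a \<and> i \<le> p a}"

lemma Dchar1:
  assumes "invm m p" "i \<in> {1..m}" "p i < i"
  shows "p i \<in> Op p i \<and> (\<forall>a\<in>Op p i. p i \<le> a)"
proof -
  have inv: "\<And>x. x \<in> {1..m} \<Longrightarrow> p (p x) = x" and im: "\<And>x. x \<in> {1..m} \<Longrightarrow> p x \<in> {1..m}"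
    and av: "avoids321 m p" using assms(1) unfolding invm_def by auto
  have pi: "p i \<in> {1..m}" using im assms(2) by blast
  have ppi: "p (p i) = i" using inv assms(2) by blast
  have "p i \<in> Op p i" unfolding Op_def using pi ppi assms(3) by auto
  moreover have "\<forall>a\<in>Op p i. p i \<le> a"
  proof
    fix a assume a: "a \<in> Op p i"
    show "p i \<le> a"
    proof (rule ccontr)
      assume "\<not> p i \<le> a"
      hence lt: "a < p i" by simp
      have a1: "1 \<le> a" "a < i" "i \<le> p a" using a unfolding Op_def by auto
      have am: "a \<in> {1..m}" using a1 assms(2) by auto
      have "p a \<noteq> i" using inv[OF am] lt by auto
      hence "i < p a" using a1 by simp
      moreover have "p a \<le> m" using im[OF am] by simp
      moreover have "i \<le> m" using assms(2) by simp
      ultimately have "1 \<le> a \<and> a < p i \<and> p i < i \<and> i \<le> m \<and> p (p i) < p a \<and> p i < p (p i)"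
        using a1(1) lt assms(3) ppi by simp
      thus False using av unfolding avoids321_def by blast
    qed
  qed
  ultimately show ?thesis by blast
qed

lemma Dchar2:
  assumes "invm m p" "i \<in> {1..m}" "\<not> i < p i" "a \<in> Op p i"
  shows "p i < i"
proof (rule ccontr)
  have inv: "\<And>x. x \<in> {1..m} \<Longrightarrow> p (p x) = x" and im: "\<And>x. x \<in> {1..m} \<Longrightarrow> p x \<in> {1..m}"
    and av: "avoids321 m p" using assms(1) unfolding invm_def by auto
  assume "\<not> p i < i"
  hence pi: "p i = i" using assms(3) by simp
  have a1: "1 \<le> a" "a < i" "a < p a" "i \<le> p a" using assms(4) unfolding Op_def by auto
  have am: "a \<in> {1..m}" using a1 assms(2) by auto
  have "p a \<noteq> i" using inv[OF am] pi a1 by auto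
  hence "i < p a" using a1 by simp
  moreover have "p a \<le> m" using im[OF am] by simp
  ultimately have "1 \<le> a \<and> a < i \<and> i < p a \<and> p a \<le> m \<and> p i < p a \<and> p (p a) < p i"
    using a1 pi inv[OF am] by simp
  thus False using av unfolding avoids321_def by blast
qed

lemma Osub:
  assumes "invm m p" "invm m s" "i \<le> m"
    "\<forall>j\<in>{1..i}. (j < p j \<longleftrightarrow> j < s j)"
    "\<forall>j. 1 \<le> j \<longrightarrow> j < i \<longrightarrow> s j < j \<longrightarrow> p j = s j"
  shows "Op p i \<subseteq> Op s i"
proof
  have invp: "\<And>x. x \<in> {1..m} \<Longrightarrow> p (p x) = x" using assms(1) unfolding invm_def by auto
  have invs: "\<And>x. x \<in> {1..m} \<Longrightarrow> s (s x) = x" and ims: "\<And>x. x \<in> {1..m} \<Longrightarrow> s x \<in> {1..m}"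
    using assms(2) unfolding invm_def by auto
  fix a assume a: "a \<in> Op p i"
  have a1: "1 \<le> a" "a < i" "a < p a" "i \<le> p a" using a unfolding Op_def by auto
  have am: "a \<in> {1..m}" using a1 assms(3) by auto
  have sa: "a < s a" using assms(4) a1 by auto
  have "i \<le> s a"
  proof (rule ccontr)
    assume "\<not> i \<le> s a"
    hence d: "s a < i" by simp
    have dm: "s a \<in> {1..m}" using ims[OF am] .
    have "s (s a) < s a" using invs[OF am] sa by simp
    hence "p (s a) = s (s a)" using assms(5) d dm by auto
    hence "p (s a) = a" using invs[OF am] by simp
    hence "p a = s a" using invp[OF dm] by metis
    thus False using d a1 by simp
  qed
  thus "a \<in> Op s i" unfolding Op_def using a1 sa by auto
qed

lemma Gl:
  assumes "invm m p" "invm m s" "K \<le> m"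
    "\<forall>j\<in>{1..K}. (j < p j \<longleftrightarrow> j < s j)"
  shows "1 \<le> i \<Longrightarrow> i \<le> K \<Longrightarrow> (p i < i \<longleftrightarrow> s i < i) \<and> (p i < i \<longrightarrow> p i = s i)"
proof (induction i rule: less_induct)
  case (less i)
  have IH1: "\<forall>j. 1 \<le> j \<longrightarrow> j < i \<longrightarrow> s j < j \<longrightarrow> p j = s j"
  proof (intro allI impI)
    fix j assume j: "1 \<le> j" "j < i" "s j < j"
    have "j \<le> K" using j less.prems by simp
    from less.IH[OF j(2) j(1) this] j(3) show "p j = s j" by simp
  qed
  have IH2: "\<forall>j. 1 \<le> j \<longrightarrow> j < i \<longrightarrow> p j < j \<longrightarrow> s j = p j"
  proof (intro allI impI)
    fix j assume j: "1 \<le> j" "j < i" "p j < j"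
    have "j \<le> K" using j less.prems by simp
    from less.IH[OF j(2) j(1) this] j(3) show "s j = p j" by simp
  qed
  have im: "i \<in> {1..m}" using less.prems assms(3) by simp
  have iK: "i \<le> m" using less.prems assms(3) by simp
  have agi: "\<forall>j\<in>{1..i}. (j < p j \<longleftrightarrow> j < s j)" using assms(4) less.prems by simp
  hence agi': "\<forall>j\<in>{1..i}. (j < s j \<longleftrightarrow> j < p j)" by simp
  have O1: "Op p i \<subseteq> Op s i" using Osub[OF assms(1,2) iK agi IH1] .
  have O2: "Op s i \<subseteq> Op p i" using Osub[OF assms(2,1) iK agi' IH2] .
  have OO: "Op p i = Op s i" using O1 O2 by blast
  have agii: "i < p i \<longleftrightarrow> i < s i" using agi less.prems by simp
  show ?case
  proof (cases "i < p i")
    case True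
    hence "i < s i" using agii by simp
    thus ?thesis using True by simp
  next
    case False
    hence F2: "\<not> i < s i" using agii by simp
    show ?thesis
    proof (cases "p i < i")
      case True
      from Dchar1[OF assms(1) im True] OO have pO: "p i \<in> Op s i" and pm: "\<forall>a\<in>Op s i. p i \<le> a" by auto
      have si: "s i < i" using Dchar2[OF assms(2) im F2 pO] .
      from Dchar1[OF assms(2) im si] OO have "s i \<in> Op p i" "\<forall>a\<in>Op p i. s i \<le> a" by auto
      hence "s i \<le> p i" "p i \<le> s i" using pm pO OO Dchar1[OF assms(1) im True] by auto
      hence "p i = s i" by simp
      thus ?thesis using True si by simp
    next
      case pf: False
      have "\<not> s i < i"
      proof
        assume si: "s i < i"
        from Dchar1[OF assms(2) im si] OO have "s i \<in> Op p i" by auto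
        from Dchar2[OF assms(1) im False this] pf show False by simp
      qed
      thus ?thesis using pf by simp
    qed
  qed
qed

lemma Gall:
  assumes "invm m p" "invm m s" "\<forall>j\<in>{1..m}. (j < p j \<longleftrightarrow> j < s j)" "i \<in> {1..m}"
  shows "p i = s i"
proof -
  note G = Gl[OF assms(1,2) order_refl assms(3)]
  have invp: "\<And>x. x \<in> {1..m} \<Longrightarrow> p (p x) = x" and imp: "\<And>x. x \<in> {1..m} \<Longrightarrow> p x \<in> {1..m}"
    using assms(1) unfolding invm_def by auto
  have invs: "\<And>x. x \<in> {1..m} \<Longrightarrow> s (s x) = x"
    using assms(2) unfolding invm_def by auto
  show ?thesis
  proof (cases "i < p i")
    case True
    let ?b = "p i"
    have bm: "?b \<in> {1..m}" using imp assms(4) by blast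
    have "p ?b < ?b" using invp assms(4) True by simp
    hence "s ?b = p ?b" using G bm by auto
    hence "s ?b = i" using invp assms(4) by simp
    hence "s (s ?b) = s i" by simp
    thus ?thesis using invs[OF bm] by simp
  next
    case False
    have i1: "1 \<le> i" "i \<le> m" using assms(4) by auto
    have eq: "i < p i \<longleftrightarrow> i < s i" using bspec[OF assms(3) assms(4)] .
    have g: "(p i < i \<longleftrightarrow> s i < i) \<and> (p i < i \<longrightarrow> p i = s i)" using G[OF i1] .
    show ?thesis
    proof (cases "p i < i")
      case True thus ?thesis using g by simp
    next
      case f2: False
      hence "\<not> s i < i" using g by simp
      thus ?thesis using f2 False eq by linarith
    qed
  qed
qed


fun bal :: "nat set \<Rightarrow> nat \<Rightarrow> nat" where
  "bal S 0 = 0"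
| "bal S (Suc i) = (if Suc i \<in> S then Suc (bal S i) else bal S i - 1)"

definition Dh :: "nat set \<Rightarrow> nat \<Rightarrow> nat set" where
  "Dh S n = {i\<in>{1..n}. i \<notin> S \<and> 0 < bal S (i - 1)}"

definition AS :: "nat set \<Rightarrow> nat \<Rightarrow> nat set" where
  "AS S n = S \<union> (\<lambda>i. 2*n+1-i) ` Dh S n"

definition BS :: "nat set \<Rightarrow> nat \<Rightarrow> nat set" where
  "BS S n = Dh S n \<union> (\<lambda>i. 2*n+1-i) ` S"

lemma cardlt_Suc:
  assumes "finite X"
  shows "card {x\<in>X. x < Suc k} = card {x\<in>X. x < k} + (if k \<in> X then 1 else 0)"
proof (cases "k \<in> X")
  case True
  have "{x\<in>X. x < Suc k} = insert k {x\<in>X. x < k}" using True by auto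
  thus ?thesis using True assms by simp
next
  case False
  have "{x\<in>X. x < Suc k} = {x\<in>X. x < k}" using False less_Suc_eq by auto
  thus ?thesis using False by simp
qed

lemma cardlt_full:
  fixes X :: "nat set"
  assumes "X \<subseteq> {1..n}" "n < u"
  shows "card {x\<in>X. x < u} = card X"
proof -
  have "x < u" if "x \<in> X" for x using subsetD[OF assms(1) that] assms(2) by simp
  hence "{x\<in>X. x < u} = X" by auto
  thus ?thesis by simp
qed

lemma cardlt_zero:
  fixes X :: "nat set"
  assumes "X \<subseteq> {1..n}" "u \<le> 1"
  shows "card {x\<in>X. x < u} = 0"
proof -
  have "\<not> x < u" if "x \<in> X" for x using subsetD[OF assms(1) that] assms(2) by simp
  hence "{x\<in>X. x < u} = {}" by auto
  thus ?thesis by simp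
qed

lemma cardlt_le:
  fixes X :: "nat set"
  assumes "finite X" shows "card {x\<in>X. x < u} \<le> card X"
  using assms by (intro card_mono) auto

lemma refl_mem:
  fixes Y :: "nat set"
  assumes "Y \<subseteq> {1..2*n}" "i \<in> {1..2*n}"
  shows "i \<in> (\<lambda>i. 2*n+1-i) ` Y \<longleftrightarrow> 2*n+1-i \<in> Y"
proof
  assume "i \<in> (\<lambda>i. 2*n+1-i) ` Y"
  then obtain y where "y \<in> Y" "i = 2*n+1-y" by auto
  moreover have "y \<le> 2*n" using assms \<open>y \<in> Y\<close> by auto
  ultimately show "2*n+1-i \<in> Y" by (metis diff_diff_cancel le_SucI add_Suc_right add_0_right Suc_eq_plus1)
next
  assume "2*n+1-i \<in> Y"
  moreover have "i = 2*n+1-(2*n+1-i)" using assms by auto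
  ultimately show "i \<in> (\<lambda>i. 2*n+1-i) ` Y" by blast
qed

lemma card_split:
  fixes X Y :: "nat set"
  assumes "X \<subseteq> {1..n}" "Y \<subseteq> {1..n}"
  shows "card {z\<in>X \<union> (\<lambda>i. 2*n+1-i) ` Y. z < t}
         = card {x\<in>X. x < t} + (card Y - card {y\<in>Y. y < 2*n+2-t})"
proof -
  let ?r = "\<lambda>i::nat. 2*n+1-i"
  have fX: "finite X" and fY: "finite Y" using assms finite_subset by blast+
  have eq: "{z\<in>X \<union> ?r ` Y. z < t} = {x\<in>X. x < t} \<union> ?r ` {y\<in>Y. 2*n+2-t \<le> y}"
  proof -
    have "\<And>y. y \<in> Y \<Longrightarrow> (?r y < t \<longleftrightarrow> 2*n+2-t \<le> y)" using assms(2) by force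
    thus ?thesis by auto
  qed
  have disj: "{x\<in>X. x < t} \<inter> ?r ` {y\<in>Y. 2*n+2-t \<le> y} = {}" using assms by force
  have inj: "inj_on ?r {y\<in>Y. 2*n+2-t \<le> y}"
    unfolding inj_on_def using assms(2) by force
  have c2: "card (?r ` {y\<in>Y. 2*n+2-t \<le> y}) = card {y\<in>Y. 2*n+2-t \<le> y}"
    using card_image[OF inj] .
  have "{y\<in>Y. 2*n+2-t \<le> y} = Y - {y\<in>Y. y < 2*n+2-t}" by auto
  hence c3: "card {y\<in>Y. 2*n+2-t \<le> y} = card Y - card {y\<in>Y. y < 2*n+2-t}"
    using fY by (simp add: card_Diff_subset)
  show ?thesis unfolding eq
    by (subst card_Un_disjoint) (use fX fY disj c2 c3 in auto)
qed

locale cons =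
  fixes S :: "nat set" and n :: nat
  assumes Ssub: "S \<subseteq> {1..n}"
begin

abbreviation "D \<equiv> Dh S n"
abbreviation "P u \<equiv> card {x\<in>S. x < u}"
abbreviation "Q u \<equiv> card {x\<in>D. x < u}"

lemma Dsub: "D \<subseteq> {1..n}" unfolding Dh_def by auto
lemma finS: "finite S" using Ssub finite_subset by blast
lemma finD: "finite D" using Dsub finite_subset by blast
lemma SD: "S \<inter> D = {}" unfolding Dh_def by auto

lemma balPQ: "i \<le> n \<Longrightarrow> bal S i + Q (Suc i) = P (Suc i)"
proof (induction i)
  case 0
  have e1: "P (Suc 0) = 0" by (rule cardlt_zero[OF Ssub]) simp
  have e2: "Q (Suc 0) = 0" by (rule cardlt_zero[OF Dsub]) simp
  show ?case by (simp only: e1 e2 bal.simps add_0)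
next
  case (Suc i)
  have IH: "bal S i + Q (Suc i) = P (Suc i)" using Suc by simp
  have P: "P (Suc (Suc i)) = P (Suc i) + (if Suc i \<in> S then 1 else 0)" using cardlt_Suc[OF finS] .
  have Q: "Q (Suc (Suc i)) = Q (Suc i) + (if Suc i \<in> D then 1 else 0)" using cardlt_Suc[OF finD] .
  have Dm: "Suc i \<in> D \<longleftrightarrow> Suc i \<notin> S \<and> 0 < bal S i" unfolding Dh_def using Suc.prems by simp
  show ?case using IH P Q Dm by auto
qed

lemma QleP: "Q u \<le> P u"
proof (cases u)
  case 0 thus ?thesis by simp
next
  case (Suc i)
  show ?thesis
  proof (cases "i \<le> n")
    case True thus ?thesis unfolding Suc using balPQ[OF True] by linarith
  next
    case False
    hence "Q u = Q (Suc n)" "P u = P (Suc n)" using cardlt_full[OF Dsub] cardlt_full[OF Ssub] Suc by auto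
    thus ?thesis using balPQ[of n] by linarith
  qed
qed

lemma cA: "card {a\<in>AS S n. a < t} = P t + (card D - Q (2*n+2-t))"
  unfolding AS_def using card_split[OF Ssub Dsub] .
lemma cB: "card {b\<in>BS S n. b < t} = Q t + (card S - P (2*n+2-t))"
  unfolding BS_def using card_split[OF Dsub Ssub] .

lemma H1: "card {b\<in>BS S n. b < t} \<le> card {a\<in>AS S n. a < t}"
proof (cases "t \<le> n+1")
  case True
  hence "P (2*n+2-t) = card S" "Q (2*n+2-t) = card D"
    using cardlt_full[OF Ssub] cardlt_full[OF Dsub] by auto
  thus ?thesis using cA cB QleP[of t] by simp
next
  case False
  hence "P t = card S" "Q t = card D" using cardlt_full[OF Ssub] cardlt_full[OF Dsub] by auto
  moreover have "P (2*n+2-t) \<le> card S" "Q (2*n+2-t) \<le> card D"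
    using cardlt_le[OF finS] cardlt_le[OF finD] by auto
  ultimately show ?thesis using cA cB QleP[of "2*n+2-t"] by simp
qed

lemma bal0: assumes "k \<in> {1..n}" "k \<notin> S" "k \<notin> D" shows "P k = Q k"
proof -
  have "bal S (k - 1) = 0" using assms unfolding Dh_def by auto
  moreover have "k - 1 \<le> n" "Suc (k - 1) = k" using assms by auto
  ultimately show ?thesis using balPQ[of "k - 1"] by simp
qed

lemma H2:
  assumes "f \<in> {1..2*n}" "f \<notin> AS S n" "f \<notin> BS S n"
  shows "card {b\<in>BS S n. b < f} = card {a\<in>AS S n. a < f}"
proof (cases "f \<le> n")
  case True
  hence fS: "f \<notin> S" "f \<notin> D" using assms unfolding AS_def BS_def by auto
  have "P f = Q f" using bal0[OF _ fS] True assms by simp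
  moreover have "P (2*n+2-f) = card S" "Q (2*n+2-f) = card D"
    using cardlt_full[OF Ssub] cardlt_full[OF Dsub] True by auto
  ultimately show ?thesis using cA cB by simp
next
  case False
  let ?k = "2*n+1-f"
  have km: "?k \<in> {1..n}" using False assms by auto
  have fk: "f \<in> (\<lambda>i. 2*n+1-i) ` Y" if "?k \<in> Y" for Y
  proof -
    have "f = 2*n+1-?k" using assms by auto
    thus ?thesis using that by blast
  qed
  have kS: "?k \<notin> S" "?k \<notin> D" using assms fk unfolding AS_def BS_def by auto
  have "P ?k = Q ?k" using bal0[OF km kS] .
  moreover have "2*n+2-f = Suc ?k" using assms by auto
  moreover have "P (Suc ?k) = P ?k" "Q (Suc ?k) = Q ?k" using cardlt_Suc[OF finS] cardlt_Suc[OF finD] kS by auto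
  moreover have "P f = card S" "Q f = card D" using cardlt_full[OF Ssub] cardlt_full[OF Dsub] False by auto
  moreover have "Q ?k \<le> card D" "P ?k \<le> card S" using cardlt_le[OF finS] cardlt_le[OF finD] by auto
  ultimately have c1: "card {b\<in>BS S n. b < f} = card D + (card S - Q ?k)"
     and c2: "card {a\<in>AS S n. a < f} = card S + (card D - Q ?k)" using cA[of f] cB[of f] by simp_all
  show ?thesis unfolding c1 c2 using \<open>Q ?k \<le> card D\<close> \<open>P ?k = Q ?k\<close> \<open>P ?k \<le> card S\<close> by linarith
qed

lemma rsub: "X \<subseteq> {1..n} \<Longrightarrow> (\<lambda>i. 2*n+1-i) ` X \<subseteq> {n+1..2*n}"
proof (rule image_subsetI)
  fix x assume "X \<subseteq> {1..n}" "x \<in> X"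
  hence "1 \<le> x" "x \<le> n" by auto
  thus "2*n+1-x \<in> {n+1..2*n}" by (simp add: le_diff_conv2)
qed

lemma ABprops: "AS S n \<subseteq> {1..2*n}" "BS S n \<subseteq> {1..2*n}" "AS S n \<inter> BS S n = {}"
   "card (AS S n) = card (BS S n)"
proof -
  let ?R = "\<lambda>X. (\<lambda>i. 2*n+1-i) ` X"
  have r1: "?R S \<subseteq> {n+1..2*n}" using rsub[OF Ssub] .
  have r2: "?R D \<subseteq> {n+1..2*n}" using rsub[OF Dsub] .
  have i1: "{n+1..2*n} \<subseteq> {1..2*n}" "{1..n} \<subseteq> {1..2*n}" by auto
  have S2: "S \<subseteq> {1..2*n}" using Ssub i1(2) by (rule subset_trans)
  have D2: "D \<subseteq> {1..2*n}" using Dsub i1(2) by (rule subset_trans)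
  have RS2: "?R S \<subseteq> {1..2*n}" using r1 i1(1) by (rule subset_trans)
  have RD2: "?R D \<subseteq> {1..2*n}" using r2 i1(1) by (rule subset_trans)
  show A: "AS S n \<subseteq> {1..2*n}" unfolding AS_def using S2 RD2 by (rule Un_least)
  show B: "BS S n \<subseteq> {1..2*n}" unfolding BS_def using D2 RS2 by (rule Un_least)
  have d1: "{1..n} \<inter> {n+1..2*n} = {}" by auto
  have rr: "?R D \<inter> ?R S = {}"
  proof -
    have b: "\<And>x. x \<in> D \<union> S \<Longrightarrow> x \<le> n" using Ssub Dsub by auto
    have "inj_on (\<lambda>i. 2*n+1-i) (D \<union> S)"
    proof (rule inj_onI)
      fix x y assume "x \<in> D \<union> S" "y \<in> D \<union> S" "2*n+1-x = 2*n+1-y"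
      with b[of x] b[of y] show "x = y" by linarith
    qed
    hence "?R (D \<inter> S) = ?R D \<inter> ?R S"
      by (rule inj_on_image_Int) auto
    thus ?thesis using SD by (simp add: Int_commute)
  qed
  have e1: "S \<inter> ?R S = {}" using Ssub r1 d1 by blast
  have e2: "?R D \<inter> D = {}" using Dsub r2 d1 by blast
  show "AS S n \<inter> BS S n = {}" unfolding AS_def BS_def Int_Un_distrib Int_Un_distrib2
    using SD e1 e2 rr by simp
  have "card {a\<in>AS S n. a < 2*n+2} = card (AS S n)" "card {b\<in>BS S n. b < 2*n+2} = card (BS S n)"
    using cardlt_full[OF A] cardlt_full[OF B] by auto
  moreover have "P (2*n+2) = card S" "Q (2*n+2) = card D"
    using cardlt_full[OF Ssub] cardlt_full[OF Dsub] by auto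
  ultimately show "card (AS S n) = card (BS S n)" using cA[of "2*n+2"] cB[of "2*n+2"] by simp
qed


lemma mt_ok: "mt (AS S n) (BS S n) (2*n)"
  by (unfold_locales) (use ABprops H1 H2 in auto)

abbreviation "pp \<equiv> matchp (AS S n) (BS S n)"

lemma pinvm: "invm (2*n) pp"
  unfolding invm_def using mt.invol[OF mt_ok] mt.img[OF mt_ok] mt.avoid[OF mt_ok] by blast

lemma symA:
  assumes "i \<in> {1..2*n}"
  shows "i \<in> AS S n \<longleftrightarrow> 2*n+1-i \<in> BS S n"
proof -
  have S2: "S \<subseteq> {1..2*n}" and D2: "D \<subseteq> {1..2*n}" using Ssub Dsub by auto
  have ri: "2*n+1-i \<in> {1..2*n}" and rri: "2*n+1-(2*n+1-i) = i" using assms by auto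
  have "2*n+1-i \<in> (\<lambda>i. 2*n+1-i) ` S \<longleftrightarrow> i \<in> S" using refl_mem[OF S2 ri] rri by simp
  moreover have "i \<in> (\<lambda>i. 2*n+1-i) ` D \<longleftrightarrow> 2*n+1-i \<in> D" using refl_mem[OF D2 assms] .
  ultimately show ?thesis unfolding AS_def BS_def by blast
qed

definition sg :: "nat \<Rightarrow> nat" where
  "sg i = (if i \<in> {1..2*n} then 2*n+1 - pp (2*n+1-i) else i)"

lemma sg_invm: "invm (2*n) sg"
proof -
  have inv: "\<And>x. x \<in> {1..2*n} \<Longrightarrow> pp (pp x) = x" and im: "\<And>x. x \<in> {1..2*n} \<Longrightarrow> pp x \<in> {1..2*n}"
    and av: "avoids321 (2*n) pp" using pinvm unfolding invm_def by auto
  have sgv: "sg i = 2*n+1 - pp (2*n+1-i)" "sg i \<in> {1..2*n}" if "i \<in> {1..2*n}" for i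
  proof -
    show "sg i = 2*n+1 - pp (2*n+1-i)" unfolding sg_def using that by simp
    have "2*n+1-i \<in> {1..2*n}" using that by auto
    hence "pp (2*n+1-i) \<in> {1..2*n}" using im by blast
    thus "sg i \<in> {1..2*n}" unfolding sg_def using that by auto
  qed
  have i1: "sg (sg i) = i" if "i \<in> {1..2*n}" for i
  proof -
    have ri: "2*n+1-i \<in> {1..2*n}" using that by auto
    have pm: "pp (2*n+1-i) \<in> {1..2*n}" using im[OF ri] .
    have "sg (sg i) = 2*n+1 - pp (2*n+1 - (2*n+1 - pp (2*n+1-i)))" using sgv[OF that] sgv[OF sgv(2)[OF that]] by simp
    also have "2*n+1 - (2*n+1 - pp (2*n+1-i)) = pp (2*n+1-i)" using pm by auto
    also have "pp (pp (2*n+1-i)) = 2*n+1-i" using inv[OF ri] .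
    finally show ?thesis using that by auto
  qed
  have a: "avoids321 (2*n) sg"
    unfolding avoids321_def
  proof
    assume "\<exists>i j k. 1 \<le> i \<and> i < j \<and> j < k \<and> k \<le> 2*n \<and> sg j < sg i \<and> sg k < sg j"
    then obtain i j k where h: "1 \<le> i" "i < j" "j < k" "k \<le> 2*n" "sg j < sg i" "sg k < sg j" by blast
    have im3: "i \<in> {1..2*n}" "j \<in> {1..2*n}" "k \<in> {1..2*n}" using h by auto
    have rm: "2*n+1-i \<in> {1..2*n}" "2*n+1-j \<in> {1..2*n}" "2*n+1-k \<in> {1..2*n}" using h by auto
    have pm: "pp (2*n+1-i) \<le> 2*n" "pp (2*n+1-j) \<le> 2*n" "pp (2*n+1-k) \<le> 2*n"
      using im[OF rm(1)] im[OF rm(2)] im[OF rm(3)] by auto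
    have "pp (2*n+1-i) < pp (2*n+1-j)" "pp (2*n+1-j) < pp (2*n+1-k)"
      using h(5,6) sgv(1)[OF im3(1)] sgv(1)[OF im3(2)] sgv(1)[OF im3(3)] pm by linarith+
    moreover have "1 \<le> 2*n+1-k" "2*n+1-k < 2*n+1-j" "2*n+1-j < 2*n+1-i" "2*n+1-i \<le> 2*n"
      using h by auto
    ultimately show False using av unfolding avoids321_def by blast
  qed
  show ?thesis unfolding invm_def using i1 sgv(2) a by blast
qed

lemma pp_centro: "i \<in> {1..2*n} \<Longrightarrow> pp i + pp (2*n+1-i) = 2*n+1"
proof -
  assume im: "i \<in> {1..2*n}"
  have ag: "\<forall>j\<in>{1..2*n}. (j < pp j \<longleftrightarrow> j < sg j)"
  proof
    fix j assume jm: "j \<in> {1..2*n}"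
    have rj: "2*n+1-j \<in> {1..2*n}" using jm by auto
    have pm: "pp (2*n+1-j) \<le> 2*n" using mt.img[OF mt_ok rj] by simp
    have "j < sg j \<longleftrightarrow> pp (2*n+1-j) < 2*n+1-j" unfolding sg_def using jm pm by auto
    also have "\<dots> \<longleftrightarrow> 2*n+1-j \<in> BS S n" using mt.def_iff[OF mt_ok] by simp
    also have "\<dots> \<longleftrightarrow> j \<in> AS S n" using symA[OF jm] by simp
    also have "\<dots> \<longleftrightarrow> j < pp j" using mt.exc_iff[OF mt_ok] by simp
    finally show "j < pp j \<longleftrightarrow> j < sg j" by simp
  qed
  have ri: "2*n+1-i \<in> {1..2*n}" using im by auto
  have "pp (2*n+1-i) = sg (2*n+1-i)" using Gall[OF pinvm sg_invm ag ri] .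
  also have "\<dots> = 2*n+1 - pp i" unfolding sg_def using ri im by auto
  finally show ?thesis using mt.img[OF mt_ok im] by auto
qed

lemma pp_IC: "pp \<in> IC321 (2*n)"
  unfolding IC321_def centrosymmetric_def involution_on_def
  using mt.perm[OF mt_ok] mt.invol[OF mt_ok] mt.avoid[OF mt_ok] pp_centro by auto

lemma pp_Epi: "Epi n pp = S"
proof -
  have "Epi n pp = AS S n \<inter> {1..n}"
    unfolding Epi_def Exc_def using mt.exc_iff[OF mt_ok] ABprops(1) by auto
  also have "\<dots> = S"
  proof -
    have "(\<lambda>i. 2*n+1-i) ` D \<inter> {1..n} = {}" using rsub[OF Dsub] by auto
    thus ?thesis unfolding AS_def using Ssub by auto
  qed
  finally show ?thesis .
qed

end

lemma ic_invm: assumes "p \<in> IC321 m" shows "invm m p"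
proof -
  have h: "p permutes {1..m}" "\<forall>i\<in>{1..m}. p (p i) = i" "avoids321 m p"
    using assms unfolding IC321_def involution_on_def by auto
  have "\<forall>i\<in>{1..m}. p i \<in> {1..m}" using permutes_in_image[OF h(1)] by simp
  thus ?thesis unfolding invm_def using h by simp
qed

lemma inj_IC:
  assumes "p \<in> IC321 (2*n)" "s \<in> IC321 (2*n)" "Epi n p = Epi n s"
  shows "p = s"
proof
  fix x
  have ip: "invm (2*n) p" and iss: "invm (2*n) s" using ic_invm assms by auto
  have cp: "\<And>i. i \<in> {1..2*n} \<Longrightarrow> p i + p (2*n+1-i) = 2*n+1"
   and cs: "\<And>i. i \<in> {1..2*n} \<Longrightarrow> s i + s (2*n+1-i) = 2*n+1"
    using assms unfolding IC321_def centrosymmetric_def by auto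
  have imp: "\<And>i. i \<in> {1..2*n} \<Longrightarrow> p i \<in> {1..2*n}" and ims: "\<And>i. i \<in> {1..2*n} \<Longrightarrow> s i \<in> {1..2*n}"
    using ip iss unfolding invm_def by auto
  have ag1: "\<forall>j\<in>{1..n}. (j < p j \<longleftrightarrow> j < s j)"
  proof
    fix j assume j: "j \<in> {1..n}"
    have "j \<in> Epi n p \<longleftrightarrow> j < p j" "j \<in> Epi n s \<longleftrightarrow> j < s j"
      unfolding Epi_def Exc_def using j by auto
    thus "j < p j \<longleftrightarrow> j < s j" using assms(3) by simp
  qed
  note G = Gl[OF ip iss _ ag1]
  have ag: "\<forall>j\<in>{1..2*n}. (j < p j \<longleftrightarrow> j < s j)"
  proof
    fix j assume j: "j \<in> {1..2*n}"
    show "j < p j \<longleftrightarrow> j < s j"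
    proof (cases "j \<le> n")
      case True thus ?thesis using ag1 j by auto
    next
      case False
      let ?j = "2*n+1-j"
      have jj: "?j \<in> {1..n}" "?j \<in> {1..2*n}" "2*n+1-?j = j" using j False by auto
      have e1: "p ?j = 2*n+1 - p j" using cp[OF jj(2)] jj(3) by simp
      have e2: "s ?j = 2*n+1 - s j" using cs[OF jj(2)] jj(3) by simp
      have pb: "p j \<le> 2*n" "s j \<le> 2*n" using imp[OF j] ims[OF j] by auto
      have "j < p j \<longleftrightarrow> p ?j < ?j" using e1 pb j by auto
      also have "\<dots> \<longleftrightarrow> s ?j < ?j" using G[of ?j] jj by auto
      also have "\<dots> \<longleftrightarrow> j < s j" using e2 pb j by auto
      finally show ?thesis .
    qed
  qed
  show "p x = s x"
  proof (cases "x \<in> {1..2*n}")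
    case True thus ?thesis using Gall[OF ip iss ag] by blast
  next
    case False
    have "p permutes {1..2*n}" "s permutes {1..2*n}" using assms unfolding IC321_def by auto
    thus ?thesis using False by (simp add: permutes_not_in)
  qed
qed

theorem mainTheorem5:
  fixes n :: nat
  assumes "n \<ge> 1"
  shows "bij_betw (Epi n) (IC321 (2 * n)) (Pow {1..n}) \<and> card (IC321 (2 * n)) = 2 ^ n"
proof -
  have inj: "inj_on (Epi n) (IC321 (2 * n))" using inj_IC by (auto simp: inj_on_def)
  have "Epi n ` IC321 (2*n) = Pow {1..n}"
  proof
    show "Epi n ` IC321 (2*n) \<subseteq> Pow {1..n}" unfolding Epi_def by auto
    show "Pow {1..n} \<subseteq> Epi n ` IC321 (2*n)"
    proof
      fix S assume "S \<in> Pow {1..n}"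
      hence c: "cons S n" by unfold_locales auto
      show "S \<in> Epi n ` IC321 (2*n)" using cons.pp_IC[OF c] cons.pp_Epi[OF c] by force
    qed
  qed
  hence b: "bij_betw (Epi n) (IC321 (2 * n)) (Pow {1..n})" using inj by (simp add: bij_betw_def)
  have "card (IC321 (2 * n)) = card (Pow {1..n::nat})" using bij_betw_same_card[OF b] .
  also have "\<dots> = 2 ^ n" by (simp add: card_Pow)
  finally show ?thesis using b by simp
qed

end
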